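(* Let $A \in \mathbb{R}^{m \times n_A}$ and $B \in \mathbb{R}^{m \times n_B}$ with nonzero columns, let $OPT$ be a set of $k$ columns of $B$ maximizing $f_A$ among all $k$-sets of columns of $B$, with $\sigma_{\min}(OPT) > 0$. Let $T_1, \dots, T_\ell$ be any partition of the columns of $B$, let $k' = \frac{32k}{\sigma_{\min}(OPT)}$, let $S_i = \textsc{Greedy}(A, T_i, k')$, and let $$OPT_i^{NS} = \{x \in OPT : x \notin \textsc{Greedy}(A, T_i \cup \{x\}, k')\}.$$ Then $f_A(S_i) \ge \frac{f_A(OPT_i^{NS})}{2}$ for all $i$.
   Context: For a finite set $V$ of vectors in $\mathbb{R}^m$, $\Pi_V$ is the orthogonal projector onto $\mathrm{span}(V)$ and, for a matrix $M$ with $m$ rows, $f_M(V) = \|\Pi_V M\|_F^2$. For a finite set $V$ of nonzero vectors, $\sigma_{\min}(V)$ is the smallest squared singular value of the matrix whose columns are the vectors of $V$ rescaled to unit length. $\textsc{Greedy}(A, C, r)$ (for a set of columns $C$): start with $S = \emptyset$; for $r$ steps (or until $C$ is exhausted), add to $S$ a column $c \in C$ maximizing $f_A(S \cup \{c\})$ (ties broken by a fixed deterministic rule); return $S$. *)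

theory Defs
  imports "HOL-Analysis.Analysis"
begin

definition proj_span :: "('a::euclidean_space) set \<Rightarrow> 'a \<Rightarrow> 'a" where
  "proj_span V a = (THE p. p \<in> span V \<and> (\<forall>v\<in>span V. (a - p) \<bullet> v = 0))"

definition fM :: "real^'n^'m \<Rightarrow> (real^'m) set \<Rightarrow> real" where
  "fM M V = (\<Sum>j\<in>UNIV. (norm (proj_span V (column j M)))\<^sup>2)"

definition cols :: "real^'n^'m \<Rightarrow> 'n set \<Rightarrow> (real^'m) set" where
  "cols B S = (\<lambda>j. column j B) ` S"

text \<open>Smallest squared singular value of the m x |S| matrix whose columns are the
  columns of B indexed by S, rescaled to unit length:
  min over unit coefficient vectors c of the squared norm of N c.\<close>
definition sigma_min :: "real^'n^'m \<Rightarrow> 'n set \<Rightarrow> real" where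
  "sigma_min B S = Inf {(norm (\<Sum>j\<in>S. c j *\<^sub>R ((1 / norm (column j B)) *\<^sub>R column j B)))\<^sup>2
                        | c. (\<Sum>j\<in>S. (c j)\<^sup>2) = 1}"

text \<open>One greedy step on candidate column indices C (of B), current selection S;
  ties broken by least rank rk (a fixed injective ranking of column indices).\<close>
definition greedy_step :: "real^'na^'m \<Rightarrow> real^'n^'m \<Rightarrow> ('n \<Rightarrow> nat) \<Rightarrow> 'n set \<Rightarrow> 'n set \<Rightarrow> 'n set" where
  "greedy_step A B rk C S =
     (if C - S = {} then S
      else (let M = {c \<in> C - S. \<forall>d \<in> C - S. fM A (cols B (insert d S)) \<le> fM A (cols B (insert c S))}
            in insert (arg_min_on rk M) S))"

definition greedy :: "real^'na^'m \<Rightarrow> real^'n^'m \<Rightarrow> ('n \<Rightarrow> nat) \<Rightarrow> 'n set \<Rightarrow> nat \<Rightarrow> 'n set" where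
  "greedy A B rk C r = (greedy_step A B rk C ^^ r) {}"

end

theory Submission
  imports Defs
begin


lemma proj_char:
  fixes V :: "'a::euclidean_space set"
  shows "proj_span V a \<in> span V \<and> (\<forall>v\<in>span V. (a - proj_span V a) \<bullet> v = 0)"
proof -
  obtain y z where y: "y \<in> span V" and z: "\<And>w. w \<in> span V \<Longrightarrow> orthogonal z w" and az: "a = y + z"
    using orthogonal_subspace_decomp_exists[of V a] by metis
  have P: "y \<in> span V \<and> (\<forall>v\<in>span V. (a - y) \<bullet> v = 0)"
    using y z az by (simp add: orthogonal_def)
  have U: "p = y" if "p \<in> span V \<and> (\<forall>v\<in>span V. (a - p) \<bullet> v = 0)" for p
  proof -
    have d: "p - y \<in> span V" using that y by (simp add: span_diff)
    have "(a - p) \<bullet> (p - y) = 0" using that d by blast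
    moreover have "(a - y) \<bullet> (p - y) = 0" using P d by blast
    ultimately have "(p - y) \<bullet> (p - y) = 0" by (simp add: inner_diff_left)
    thus ?thesis by simp
  qed
  have "proj_span V a = y" unfolding proj_span_def using P U by (rule the_equality)
  thus ?thesis using P by simp
qed

lemma proj_in: "proj_span V a \<in> span V" using proj_char by blast
lemma proj_orth: "v \<in> span V \<Longrightarrow> (a - proj_span V a) \<bullet> v = 0" using proj_char by blast

lemma proj_unique:
  fixes V :: "'a::euclidean_space set"
  assumes "p \<in> span V" "\<forall>v\<in>span V. (a - p) \<bullet> v = 0"
  shows "proj_span V a = p"
proof -
  have d: "p - proj_span V a \<in> span V" using span_diff[OF assms(1) proj_in] .
  have "(a - p) \<bullet> (p - proj_span V a) = 0" using assms d by blast
  moreover have "(a - proj_span V a) \<bullet> (p - proj_span V a) = 0" using proj_orth d by blast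
  ultimately have "(p - proj_span V a) \<bullet> (p - proj_span V a) = 0" by (simp add: inner_diff_left)
  thus ?thesis by simp
qed

lemma proj_sq: "(norm (proj_span V a))\<^sup>2 = a \<bullet> proj_span V a"
proof -
  have "(a - proj_span V a) \<bullet> proj_span V a = 0" by (rule proj_orth[OF proj_in])
  thus ?thesis by (simp add: inner_diff_left power2_norm_eq_inner)
qed

lemma proj_norm_le: "norm (proj_span V a) \<le> norm a"
proof -
  have "(norm (proj_span V a))\<^sup>2 \<le> norm a * norm (proj_span V a)"
    using proj_sq[of V a] Cauchy_Schwarz_ineq2[of a "proj_span V a"] by linarith
  hence "norm (proj_span V a) * norm (proj_span V a) \<le> norm a * norm (proj_span V a)"
    by (simp add: power2_eq_square)
  thus ?thesis
    by (cases "norm (proj_span V a) = 0") (auto simp del: norm_eq_zero simp add: mult_le_cancel_right)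
qed

lemma proj_diff: "proj_span V (a - b) = proj_span V a - proj_span V b"
proof (rule proj_unique)
  show "proj_span V a - proj_span V b \<in> span V" using span_diff[OF proj_in proj_in] .
  show "\<forall>v\<in>span V. (a - b - (proj_span V a - proj_span V b)) \<bullet> v = 0"
  proof
    fix v assume v: "v \<in> span V"
    have "(a - b - (proj_span V a - proj_span V b)) = (a - proj_span V a) - (b - proj_span V b)" by simp
    thus "(a - b - (proj_span V a - proj_span V b)) \<bullet> v = 0"
      using proj_orth[OF v, of a] proj_orth[OF v, of b] by (simp add: inner_diff_left)
  qed
qed

lemma proj_pyth:
  assumes VW: "V \<subseteq> span W"
  shows "(norm (proj_span W a))\<^sup>2 = (norm (proj_span V a))\<^sup>2 + (norm (proj_span W a - proj_span V a))\<^sup>2"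
proof -
  have sVW: "span V \<subseteq> span W" using VW by (metis span_mono span_span)
  let ?v = "proj_span V a" and ?w = "proj_span W a"
  have vW: "?v \<in> span W" using sVW proj_in by blast
  have "(a - ?w) \<bullet> ?v = 0" using proj_orth[OF vW] .
  hence "a \<bullet> ?v - ?w \<bullet> ?v = 0" by (simp add: inner_diff_left)
  hence "?v \<bullet> ?w = a \<bullet> ?v" by (simp add: inner_commute)
  hence orth: "?v \<bullet> (?w - ?v) = 0" using proj_sq[of V a] by (simp add: inner_diff_right power2_norm_eq_inner)
  have gen: "\<And>v d::'b::real_inner. (v+d)\<bullet>(v+d) = v\<bullet>v + d\<bullet>d + 2*(v\<bullet>d)"
    by (simp add: inner_add_left inner_add_right inner_commute)
  have "?w = ?v + (?w - ?v)" by simp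
  hence "(norm ?w)\<^sup>2 = (?v + (?w - ?v)) \<bullet> (?v + (?w - ?v))" by (metis power2_norm_eq_inner)
  also have "\<dots> = (norm ?v)\<^sup>2 + (norm (?w - ?v))\<^sup>2 + 2 * (?v \<bullet> (?w - ?v))"
    unfolding gen by (simp add: power2_norm_eq_inner)
  finally show ?thesis using orth by simp
qed

lemma proj_gain:
  assumes VW: "V \<subseteq> span W" and u: "u \<in> span W"
  shows "((a - proj_span V a) \<bullet> u)\<^sup>2 \<le> ((norm (proj_span W a))\<^sup>2 - (norm (proj_span V a))\<^sup>2) * (norm u)\<^sup>2"
proof -
  let ?v = "proj_span V a" and ?w = "proj_span W a"
  have "(a - ?w) \<bullet> u = 0" using proj_orth[OF u] .
  hence e: "(a - ?v) \<bullet> u = (?w - ?v) \<bullet> u" by (simp add: inner_diff_left)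
  have "((?w - ?v) \<bullet> u)\<^sup>2 \<le> (norm (?w - ?v))\<^sup>2 * (norm u)\<^sup>2"
    using Cauchy_Schwarz_ineq[of "?w - ?v" u] by (simp add: power2_norm_eq_inner)
  thus ?thesis using e proj_pyth[OF VW, of a] by simp
qed



definition ub :: "real^'n^'m \<Rightarrow> 'n \<Rightarrow> real^'m" where
  "ub B x = (1 / norm (column x B)) *\<^sub>R column x B"

lemma fM_nonneg: "0 \<le> fM A V" by (simp add: fM_def sum_nonneg)

lemma fM_mono: assumes VW: "V \<subseteq> span W" shows "fM A V \<le> fM A W"
  unfolding fM_def
proof (rule sum_mono)
  fix j
  have "0 \<le> (norm (proj_span W (column j A) - proj_span V (column j A)))\<^sup>2" by simp
  thus "(norm (proj_span V (column j A)))\<^sup>2 \<le> (norm (proj_span W (column j A)))\<^sup>2"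
    using proj_pyth[OF VW, of "column j A"] by linarith
qed

lemma cols_mono: assumes "S \<subseteq> S'" shows "cols B S \<subseteq> span (cols B S')"
proof -
  have "cols B S \<subseteq> cols B S'" using assms unfolding cols_def by (rule image_mono)
  thus ?thesis using span_superset[of "cols B S'"] by (rule order_trans)
qed

lemma ub_norm: "column x B \<noteq> 0 \<Longrightarrow> norm (ub B x) = 1"
  by (simp add: ub_def)

lemma ub_span: assumes "x \<in> S" shows "ub B x \<in> span (cols B S)"
proof -
  have "column x B \<in> cols B S" using assms by (simp add: cols_def)
  hence "column x B \<in> span (cols B S)" by (rule span_base)
  thus ?thesis unfolding ub_def by (rule span_mul)
qed

lemma fM_gain:
  assumes "column x B \<noteq> 0"
  shows "(\<Sum>j\<in>UNIV. ((column j A - proj_span (cols B S) (column j A)) \<bullet> ub B x)\<^sup>2)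
         \<le> fM A (cols B (insert x S)) - fM A (cols B S)"
proof -
  have VW: "cols B S \<subseteq> span (cols B (insert x S))" by (rule cols_mono) auto
  have u: "ub B x \<in> span (cols B (insert x S))" by (rule ub_span) simp
  show ?thesis
    unfolding fM_def sum_subtractf[symmetric]
    by (rule sum_mono) (use proj_gain[OF VW u] ub_norm[OF assms] in simp)
qed

lemma span_repr:
  fixes B :: "real^'n^'m"
  assumes nz: "\<forall>j. column j B \<noteq> 0" and fin: "finite Os" and w: "w \<in> span (cols B Os)"
  shows "\<exists>c. w = (\<Sum>x\<in>Os. c x *\<^sub>R ub B x)"
  using w
proof (induction rule: span_induct_alt)
  case base
  show ?case by (rule exI[of _ "\<lambda>_. 0"]) simp
next
  case (step a v y)
  then obtain c where c: "y = (\<Sum>x\<in>Os. c x *\<^sub>R ub B x)" by blast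
  from step(1) obtain z where z: "z \<in> Os" "v = column z B" unfolding cols_def by blast
  have v: "v = norm (column z B) *\<^sub>R ub B z" using z nz by (simp add: ub_def)
  let ?c = "\<lambda>t. c t + (if t = z then a * norm (column z B) else 0)"
  have "(\<Sum>x\<in>Os. ?c x *\<^sub>R ub B x) = (\<Sum>x\<in>Os. c x *\<^sub>R ub B x) + (\<Sum>x\<in>Os. (if x = z then a * norm (column z B) else 0) *\<^sub>R ub B x)"
    by (simp add: scaleR_add_left sum.distrib)
  also have "(\<Sum>x\<in>Os. (if x = z then a * norm (column z B) else 0) *\<^sub>R ub B x) = (a * norm (column z B)) *\<^sub>R ub B z"
    using fin z(1) by (simp add: if_distrib[of "\<lambda>s. s *\<^sub>R _"] sum.delta cong: if_cong)
  finally have eq: "(\<Sum>x\<in>Os. ?c x *\<^sub>R ub B x) = a *\<^sub>R v + y" using c v by simp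
  show ?case
    apply (rule exI[of _ ?c])
    using eq[symmetric] by simp
qed

lemma sigma_bound:
  fixes B :: "real^'n^'m"
  assumes nz: "\<forall>j. column j B \<noteq> 0" and sp: "sigma_min B OPT > 0"
    and fin: "finite OPT" and sub: "Os \<subseteq> OPT" and w: "w \<in> span (cols B Os)"
  shows "sigma_min B OPT * (norm w)\<^sup>2 \<le> (\<Sum>x\<in>Os. (w \<bullet> ub B x)\<^sup>2)"
proof -
  have finO: "finite Os" using fin sub finite_subset by blast
  obtain c where c: "w = (\<Sum>x\<in>Os. c x *\<^sub>R ub B x)" using span_repr[OF nz finO w] by blast
  define s2 where "s2 = (\<Sum>x\<in>Os. (c x)\<^sup>2)"
  define Q where "Q = (\<Sum>x\<in>Os. (w \<bullet> ub B x)\<^sup>2)"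
  have Q0: "0 \<le> Q" unfolding Q_def by (simp add: sum_nonneg)
  have s20: "0 \<le> s2" unfolding s2_def by (simp add: sum_nonneg)
  have "w \<bullet> w = w \<bullet> (\<Sum>x\<in>Os. c x *\<^sub>R ub B x)"
    by (rule arg_cong[where f="\<lambda>t. w \<bullet> t"]) (rule c)
  hence ww: "(norm w)\<^sup>2 = (\<Sum>x\<in>Os. c x * (w \<bullet> ub B x))"
    by (simp add: power2_norm_eq_inner inner_sum_right)
  have cs: "((norm w)\<^sup>2)\<^sup>2 \<le> s2 * Q"
    unfolding ww s2_def Q_def by (rule Cauchy_Schwarz_ineq_sum)
  show ?thesis
  proof (cases "s2 = 0")
    case True
    hence "\<forall>x\<in>Os. c x = 0" using finO unfolding s2_def by (simp add: sum_nonneg_eq_0_iff)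
    hence "w = 0" using c by simp
    thus ?thesis using Q0 unfolding Q_def by simp
  next
    case False
    hence s2p: "s2 > 0" using s20 by simp
    define d where "d y = (if y \<in> Os then c y / sqrt s2 else 0)" for y
    have d1: "(\<Sum>y\<in>OPT. (d y)\<^sup>2) = 1"
    proof -
      have "(\<Sum>y\<in>OPT. (d y)\<^sup>2) = (\<Sum>y\<in>Os. (d y)\<^sup>2)"
        by (rule sum.mono_neutral_right[OF fin sub]) (simp add: d_def)
      also have "\<dots> = (\<Sum>y\<in>Os. (c y)\<^sup>2 / s2)"
        by (rule sum.cong) (use s20 in \<open>simp_all add: d_def power_divide\<close>)
      also have "\<dots> = 1" using s2p unfolding s2_def by (simp add: sum_divide_distrib[symmetric])
      finally show ?thesis .
    qed
    have dw: "(\<Sum>y\<in>OPT. d y *\<^sub>R ub B y) = (1 / sqrt s2) *\<^sub>R w"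
    proof -
      have "(\<Sum>y\<in>OPT. d y *\<^sub>R ub B y) = (\<Sum>y\<in>Os. d y *\<^sub>R ub B y)"
        by (rule sum.mono_neutral_right[OF fin sub]) (simp add: d_def)
      also have "\<dots> = (\<Sum>y\<in>Os. (1 / sqrt s2) *\<^sub>R (c y *\<^sub>R ub B y))"
        by (rule sum.cong) (simp_all add: d_def)
      also have "\<dots> = (1 / sqrt s2) *\<^sub>R w" using c by (simp add: scaleR_sum_right)
      finally show ?thesis .
    qed
    have mem: "(norm w)\<^sup>2 / s2 \<in> {(norm (\<Sum>j\<in>OPT. c j *\<^sub>R ((1 / norm (column j B)) *\<^sub>R column j B)))\<^sup>2
                        | c. (\<Sum>j\<in>OPT. (c j)\<^sup>2) = 1}"
    proof -
      have eq: "(norm (\<Sum>j\<in>OPT. d j *\<^sub>R ((1 / norm (column j B)) *\<^sub>R column j B)))\<^sup>2 = (norm w)\<^sup>2 / s2"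
        using dw s20 unfolding ub_def by (simp add: power_divide)
      show ?thesis by (rule CollectI, rule exI[of _ d], rule conjI[OF eq[symmetric] d1])
    qed
    have bdd: "bdd_below {(norm (\<Sum>j\<in>OPT. c j *\<^sub>R ((1 / norm (column j B)) *\<^sub>R column j B)))\<^sup>2
                        | c. (\<Sum>j\<in>OPT. (c j)\<^sup>2) = 1}"
      by (rule bdd_belowI[of _ 0]) auto
    have "sigma_min B OPT \<le> (norm w)\<^sup>2 / s2"
      unfolding sigma_min_def by (rule cInf_lower[OF mem bdd])
    hence sig: "sigma_min B OPT * s2 \<le> (norm w)\<^sup>2" using s2p by (simp add: pos_le_divide_eq)
    show ?thesis
    proof (cases "norm w = 0")
      case True thus ?thesis using Q0 unfolding Q_def by simp
    next
      case False
      hence N: "(norm w)\<^sup>2 > 0" by simp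
      have "sigma_min B OPT * (norm w)\<^sup>2 * (norm w)\<^sup>2 \<le> sigma_min B OPT * (s2 * Q)"
        using cs sp by (simp add: power2_eq_square mult.assoc)
      also have "\<dots> = (sigma_min B OPT * s2) * Q" by simp
      also have "\<dots> \<le> (norm w)\<^sup>2 * Q" using sig Q0 by (rule mult_right_mono)
      finally have "(sigma_min B OPT * (norm w)\<^sup>2) * (norm w)\<^sup>2 \<le> Q * (norm w)\<^sup>2" by (simp add: mult.commute)
      thus ?thesis using N unfolding Q_def by (simp add: mult_le_cancel_right)
    qed
  qed
qed



lemma aux_ineq:
  fixes P D Q R :: real
  assumes "0 \<le> P" "0 \<le> D" "0 \<le> Q" "P \<le> D + Q" "Q \<le> R"
  shows "P\<^sup>2 \<le> 4 * D\<^sup>2 + 4/3 * R\<^sup>2"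
proof -
  have "P * P \<le> (D + Q) * (D + Q)" using assms by (intro mult_mono) auto
  moreover have "Q * Q \<le> R * R" using assms by (intro mult_mono) auto
  moreover have "0 \<le> (3*D - Q) * (3*D - Q)" by simp
  ultimately show ?thesis by (simp add: power2_eq_square algebra_simps)
qed

lemma resid_bound:
  fixes A :: "real^'na^'m" and B :: "real^'nb^'m"
  assumes nz: "\<forall>j. column j B \<noteq> 0" and sp: "sigma_min B OPT > 0"
    and sub: "Os \<subseteq> OPT"
    and hS: "fM A (cols B S) \<le> fM A (cols B Os) / 2"
  shows "sigma_min B OPT * fM A (cols B Os) / 12
     \<le> (\<Sum>x\<in>Os. \<Sum>j\<in>UNIV. ((column j A - proj_span (cols B S) (column j A)) \<bullet> ub B x)\<^sup>2)"
proof -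
  define r where "r j = column j A - proj_span (cols B S) (column j A)" for j
  define w where "w j = proj_span (cols B Os) (r j)" for j
  define \<sigma> where "\<sigma> = sigma_min B OPT"
  have fin: "finite OPT" by simp
  have per_j: "\<sigma> * (norm (w j))\<^sup>2 \<le> (\<Sum>x\<in>Os. (r j \<bullet> ub B x)\<^sup>2)" for j
  proof -
    have "\<sigma> * (norm (w j))\<^sup>2 \<le> (\<Sum>x\<in>Os. (w j \<bullet> ub B x)\<^sup>2)"
      unfolding \<sigma>_def w_def by (rule sigma_bound[OF nz sp fin sub proj_in])
    also have "\<dots> = (\<Sum>x\<in>Os. (r j \<bullet> ub B x)\<^sup>2)"
    proof (rule sum.cong)
      fix x assume x: "x \<in> Os"
      have "(r j - w j) \<bullet> ub B x = 0" unfolding w_def by (rule proj_orth[OF ub_span[OF x]])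
      hence "w j \<bullet> ub B x = r j \<bullet> ub B x" by (simp add: inner_diff_left)
      thus "(w j \<bullet> ub B x)\<^sup>2 = (r j \<bullet> ub B x)\<^sup>2" by simp
    qed simp
    finally show ?thesis .
  qed
  have tri: "(norm (proj_span (cols B Os) (column j A)))\<^sup>2
     \<le> 4 * (norm (w j))\<^sup>2 + 4/3 * (norm (proj_span (cols B S) (column j A)))\<^sup>2" for j
  proof -
    let ?p = "proj_span (cols B Os) (column j A)"
    let ?q = "proj_span (cols B Os) (proj_span (cols B S) (column j A))"
    have wpq: "w j = ?p - ?q" unfolding w_def r_def by (rule proj_diff)
    have "norm ?p \<le> norm (?p - ?q) + norm ?q"
      using norm_triangle_ineq[of "?p - ?q" ?q] by simp
    moreover have "norm ?q \<le> norm (proj_span (cols B S) (column j A))" by (rule proj_norm_le)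
    ultimately show ?thesis unfolding wpq by (intro aux_ineq) auto
  qed
  define F where "F = fM A (cols B Os)"
  define W where "W = (\<Sum>j\<in>UNIV. (norm (w j))\<^sup>2)"
  have "F \<le> (\<Sum>j\<in>UNIV. 4 * (norm (w j))\<^sup>2 + 4/3 * (norm (proj_span (cols B S) (column j A)))\<^sup>2)"
    unfolding F_def fM_def by (rule sum_mono) (rule tri)
  also have "\<dots> = 4 * W + 4/3 * fM A (cols B S)"
    unfolding W_def fM_def by (simp add: sum.distrib sum_distrib_left)
  finally have "F \<le> 4 * W + 4/3 * fM A (cols B S)" .
  hence FW: "F / 12 \<le> W" using hS unfolding F_def by linarith
  have s0: "0 \<le> \<sigma>" using sp unfolding \<sigma>_def by simp
  have "\<sigma> * F / 12 \<le> \<sigma> * W" using mult_left_mono[OF FW s0] by simp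
  also have "\<dots> = (\<Sum>j\<in>UNIV. \<sigma> * (norm (w j))\<^sup>2)" unfolding W_def by (simp add: sum_distrib_left)
  also have "\<dots> \<le> (\<Sum>j\<in>UNIV. \<Sum>x\<in>Os. (r j \<bullet> ub B x)\<^sup>2)" by (rule sum_mono) (rule per_j)
  also have "\<dots> = (\<Sum>x\<in>Os. \<Sum>j\<in>UNIV. (r j \<bullet> ub B x)\<^sup>2)" by (rule sum.swap)
  finally show ?thesis unfolding \<sigma>_def F_def r_def .
qed

lemma greedy_Suc: "greedy A B rk C (Suc t) = greedy_step A B rk C (greedy A B rk C t)"
  by (simp add: greedy_def)

lemma greedy_0: "greedy A B rk C 0 = {}"
  by (simp add: greedy_def)

lemma step_sub: "S \<subseteq> greedy_step A B rk C S"
  by (auto simp add: greedy_step_def Let_def)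

lemma greedy_mono: "t \<le> t' \<Longrightarrow> greedy A B rk C t \<subseteq> greedy A B rk C t'"
proof (induction t')
  case 0 thus ?case by simp
next
  case (Suc t')
  show ?case
  proof (cases "t = Suc t'")
    case True thus ?thesis by simp
  next
    case False
    hence "t \<le> t'" using Suc.prems by simp
    hence "greedy A B rk C t \<subseteq> greedy A B rk C t'" by (rule Suc.IH)
    also have "\<dots> \<subseteq> greedy A B rk C (Suc t')" unfolding greedy_Suc by (rule step_sub)
    finally show ?thesis .
  qed
qed

lemma finite_ex_max:
  fixes g :: "'a \<Rightarrow> real"
  assumes "finite X" "X \<noteq> {}"
  shows "\<exists>c\<in>X. \<forall>d\<in>X. g d \<le> g c"
proof -
  have "Max (g ` X) \<in> g ` X" using assms by simp
  then obtain c where c: "c \<in> X" "g c = Max (g ` X)" by auto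
  have "\<forall>d\<in>X. g d \<le> g c" using assms c by simp
  thus ?thesis using c by blast
qed

lemma step_compare:
  fixes A :: "real^'na^'m" and B :: "real^'nb^'m"
  assumes rk: "inj rk" and xS: "x \<notin> S" and xn: "x \<notin> greedy_step A B rk (insert x C) S"
  shows "greedy_step A B rk C S = greedy_step A B rk (insert x C) S
     \<and> fM A (cols B (insert x S)) \<le> fM A (cols B (greedy_step A B rk C S))"
proof -
  define g where "g d = fM A (cols B (insert d S))" for d
  define M' where "M' = {c \<in> insert x C - S. \<forall>d \<in> insert x C - S. g d \<le> g c}"
  define M where "M = {c \<in> C - S. \<forall>d \<in> C - S. g d \<le> g c}"
  have ne': "insert x C - S \<noteq> {}" using xS by auto
  have st': "greedy_step A B rk (insert x C) S = insert (arg_min_on rk M') S"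
    unfolding greedy_step_def Let_def M'_def g_def by (simp only: if_not_P[OF ne'])
  have M'ne: "M' \<noteq> {}"
    using finite_ex_max[of "insert x C - S" g] ne' unfolding M'_def by auto
  have finM': "finite M'" by simp
  define c where "c = arg_min_on rk M'"
  have cM': "c \<in> M'" unfolding c_def by (rule arg_min_if_finite(1)[OF finM' M'ne])
  have cx: "c \<noteq> x" using xn st' unfolding c_def by auto
  have cC: "c \<in> C - S" using cM' cx unfolding M'_def by auto
  hence ne: "C - S \<noteq> {}" by auto
  have st: "greedy_step A B rk C S = insert (arg_min_on rk M) S"
    unfolding greedy_step_def Let_def M_def g_def by (simp only: if_not_P[OF ne])
  have cM: "c \<in> M" using cC cM' unfolding M_def M'_def by auto
  have MM': "M \<subseteq> M'"
  proof
    fix m assume m: "m \<in> M"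
    have "g c \<le> g m" using m cC unfolding M_def by auto
    moreover have "\<forall>d \<in> insert x C - S. g d \<le> g c" using cM' unfolding M'_def by auto
    ultimately show "m \<in> M'" using m unfolding M_def M'_def by force
  qed
  have Mne: "M \<noteq> {}" using cM by auto
  have finM: "finite M" by simp
  define c' where "c' = arg_min_on rk M"
  have c'M: "c' \<in> M" unfolding c'_def by (rule arg_min_if_finite(1)[OF finM Mne])
  have "rk c \<le> rk c'" unfolding c_def using arg_min_least[OF finM' M'ne] c'M MM' by auto
  moreover have "rk c' \<le> rk c" unfolding c'_def using arg_min_least[OF finM Mne cM] .
  ultimately have "rk c = rk c'" by simp
  hence cc': "c' = c" using rk by (simp add: inj_eq)
  have eqs: "greedy_step A B rk C S = greedy_step A B rk (insert x C) S"
    using st st' cc' unfolding c_def c'_def by simp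
  have "g x \<le> g c" using cM' xS unfolding M'_def by auto
  hence "fM A (cols B (insert x S)) \<le> fM A (cols B (greedy_step A B rk C S))"
    using st cc' unfolding g_def c'_def by simp
  with eqs show ?thesis by simp
qed

lemma greedy_same:
  fixes A :: "real^'na^'m" and B :: "real^'nb^'m"
  assumes rk: "inj rk" and xN: "x \<notin> greedy A B rk (insert x C) N"
  shows "t \<le> N \<Longrightarrow> greedy A B rk C t = greedy A B rk (insert x C) t"
proof (induction t)
  case 0 thus ?case by (simp add: greedy_0)
next
  case (Suc t)
  have IH: "greedy A B rk C t = greedy A B rk (insert x C) t" using Suc by simp
  have x1: "x \<notin> greedy A B rk (insert x C) (Suc t)" using xN greedy_mono[OF Suc.prems] by blast
  have x0: "x \<notin> greedy A B rk (insert x C) t" using x1 greedy_mono[where t=t and t'="Suc t" and C="insert x C" and A=A and B=B and rk=rk] by auto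
  show ?case
    using step_compare[OF rk x0 x1[unfolded greedy_Suc]] IH by (simp add: greedy_Suc)
qed



lemma fM_empty: "fM A (cols B {}) = 0"
proof -
  have "proj_span (cols B {}) a = 0" for a
    using proj_in[of "cols B {}" a] by (simp add: cols_def)
  thus ?thesis by (simp add: fM_def)
qed

theorem lemma3:
  fixes A :: "real^'na^'m" and B :: "real^'nb^'m"
    and rk :: "'nb \<Rightarrow> nat" and OPT :: "'nb set" and k :: nat
    and T :: "nat \<Rightarrow> 'nb set" and l :: nat
  assumes A_nz: "\<forall>j. column j A \<noteq> 0"
    and B_nz: "\<forall>j. column j B \<noteq> 0"
    and rk_inj: "inj rk"
    and OPT_card: "card OPT = k"
    and OPT_max: "\<forall>S. card S = k \<longrightarrow> fM A (cols B S) \<le> fM A (cols B OPT)"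
    and sig_pos: "sigma_min B OPT > 0"
    and T_nonempty: "\<forall>i\<in>{1..l}. T i \<noteq> {}"
    and T_disj: "\<forall>i\<in>{1..l}. \<forall>j\<in>{1..l}. i \<noteq> j \<longrightarrow> T i \<inter> T j = {}"
    and T_cover: "(\<Union>i\<in>{1..l}. T i) = UNIV"
  shows "\<forall>i\<in>{1..l}.
           fM A (cols B (greedy A B rk (T i) (nat \<lceil>32 * real k / sigma_min B OPT\<rceil>)))
             \<ge> fM A (cols B {x \<in> OPT. x \<notin> greedy A B rk (insert x (T i)) (nat \<lceil>32 * real k / sigma_min B OPT\<rceil>)}) / 2"
proof
  fix i assume "i \<in> {1..l}"
  define N where "N = nat \<lceil>32 * real k / sigma_min B OPT\<rceil>"
  define C where "C = T i"
  define Os where "Os = {x \<in> OPT. x \<notin> greedy A B rk (insert x C) N}"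
  define F where "F = fM A (cols B Os)"
  define \<sigma> where "\<sigma> = sigma_min B OPT"
  define f where "f t = fM A (cols B (greedy A B rk C t))" for t
  have sub: "Os \<subseteq> OPT" unfolding Os_def by auto
  have F0: "0 \<le> F" unfolding F_def by (rule fM_nonneg)
  have f0: "0 \<le> f t" for t unfolding f_def by (rule fM_nonneg)
  have fmono: "f t \<le> f t'" if "t \<le> t'" for t t'
    unfolding f_def by (rule fM_mono[OF cols_mono[OF greedy_mono[OF that]]])
  have cardOs: "card Os \<le> k" using card_mono[OF _ sub] OPT_card by simp
  have "F / 2 \<le> f N"
  proof (rule ccontr)
    assume "\<not> F / 2 \<le> f N"
    hence lt: "f N < F / 2" by simp
    show False
    proof (cases "k = 0")
      case True
      hence "OPT = {}" using OPT_card by simp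
      hence "Os = {}" using sub by auto
      hence "F = 0" unfolding F_def by (simp add: fM_empty)
      thus False using lt f0[of N] by simp
    next
      case False
      hence kpos: "0 < real k" by simp
      have step: "\<sigma> * F / 12 \<le> real k * (f (Suc t) - f t)" if tN: "t < N" for t
      proof -
        let ?S = "greedy A B rk C t"
        have hS: "fM A (cols B ?S) \<le> fM A (cols B Os) / 2"
          using fmono[of t N] tN lt unfolding f_def F_def by simp
        have "\<sigma> * F / 12 \<le> (\<Sum>x\<in>Os. \<Sum>j\<in>UNIV. ((column j A - proj_span (cols B ?S) (column j A)) \<bullet> ub B x)\<^sup>2)"
          unfolding \<sigma>_def F_def by (rule resid_bound[OF B_nz sig_pos sub hS])
        also have "\<dots> \<le> (\<Sum>x\<in>Os. f (Suc t) - f t)"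
        proof (rule sum_mono)
          fix x assume x: "x \<in> Os"
          hence xN: "x \<notin> greedy A B rk (insert x C) N" unfolding Os_def by simp
          have same: "greedy A B rk C t' = greedy A B rk (insert x C) t'" if "t' \<le> N" for t'
            by (rule greedy_same[OF rk_inj xN that])
          have x1: "x \<notin> greedy A B rk (insert x C) (Suc t)"
            using xN greedy_mono[where t="Suc t" and t'=N and C="insert x C" and A=A and B=B and rk=rk] tN by auto
          have x0: "x \<notin> greedy A B rk (insert x C) t"
            using x1 greedy_mono[where t=t and t'="Suc t" and C="insert x C" and A=A and B=B and rk=rk] by auto
          note cmp = step_compare[OF rk_inj x0 x1[unfolded greedy_Suc]]
          have "(\<Sum>j\<in>UNIV. ((column j A - proj_span (cols B ?S) (column j A)) \<bullet> ub B x)\<^sup>2)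
                \<le> fM A (cols B (insert x ?S)) - fM A (cols B ?S)"
            using fM_gain B_nz by blast
          also have "fM A (cols B (insert x ?S)) \<le> f (Suc t)"
          proof -
            have e: "greedy A B rk C t = greedy A B rk (insert x C) t" using same[of t] tN by simp
            show ?thesis using conjunct2[OF cmp] unfolding f_def greedy_Suc e .
          qed
          finally show "(\<Sum>j\<in>UNIV. ((column j A - proj_span (cols B ?S) (column j A)) \<bullet> ub B x)\<^sup>2)
                \<le> f (Suc t) - f t" unfolding f_def by simp
        qed
        also have "\<dots> = real (card Os) * (f (Suc t) - f t)" by simp
        also have "\<dots> \<le> real k * (f (Suc t) - f t)"
          using cardOs fmono[of t "Suc t"] by (intro mult_right_mono) auto
        finally show ?thesis .
      qed
      have "real N * (\<sigma> * F / 12) = (\<Sum>t<N. \<sigma> * F / 12)" by simp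
      also have "\<dots> \<le> (\<Sum>t<N. real k * (f (Suc t) - f t))" by (rule sum_mono) (use step in simp)
      also have "\<dots> = real k * (f N - f 0)"
        by (simp add: sum_distrib_left[symmetric] sum_lessThan_telescope)
      also have "\<dots> \<le> real k * f N" using f0[of 0] kpos by simp
      finally have A1: "real N * (\<sigma> * F / 12) \<le> real k * f N" .
      have sp: "0 < \<sigma>" unfolding \<sigma>_def by (rule sig_pos)
      have "32 * real k / \<sigma> \<le> real N"
        unfolding N_def \<sigma>_def by linarith
      hence "32 * real k \<le> real N * \<sigma>" using sp by (simp add: divide_le_eq)
      hence A2: "32 * real k * F \<le> real N * \<sigma> * F" using F0 by (rule mult_right_mono)
      have A3: "real k * f N < real k * (F / 2)" using lt kpos by simp
      have "real N * (\<sigma> * F / 12) = real N * \<sigma> * F / 12" by simp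
      hence "32 * (real k * F) < 6 * (real k * F)" using A1 A2 A3 by (simp add: algebra_simps)
      moreover have "0 \<le> real k * F" using F0 by simp
      ultimately show False by linarith
    qed
  qed
  thus "fM A (cols B (greedy A B rk (T i) (nat \<lceil>32 * real k / sigma_min B OPT\<rceil>)))
          \<ge> fM A (cols B {x \<in> OPT. x \<notin> greedy A B rk (insert x (T i)) (nat \<lceil>32 * real k / sigma_min B OPT\<rceil>)}) / 2"
    unfolding f_def F_def Os_def N_def C_def by simp
qed

end
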